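(* Let $p>q>1$ be relatively prime integers and write $p=mq+r$ with $m\in\mathbb{N}$ and $1\le r\le q-1$. Then for every integer $k\ge 1$, the map $T_{\frac{p}{q}}\circ T_{kq}$ has an absolutely continuous invariant probability measure with density $$f_{\frac{p}{q}\circ kq}(x)=\frac{p-r}{p}\left(1+\frac{q}{p-r}\mathbf{1}_{[0,\frac{r}{q})}(x)\right),\qquad x\in[0,1),$$ which in particular does not depend on $k$.
   Context: For a real number $\gamma>1$ let $T_\gamma:[0,1)\to[0,1)$, $T_\gamma(x)=\gamma x \bmod 1$. The density is with respect to Lebesgue measure on $[0,1)$. *)

theory Defs
  imports "HOL-Probability.Probability"
begin

definition T :: "real \<Rightarrow> real \<Rightarrow> real" where
  "T \<gamma> x = frac (\<gamma> * x)"

definition unit_leb :: "real measure" where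
  "unit_leb = restrict_space lborel {0..<1}"

definition f_dens :: "int \<Rightarrow> int \<Rightarrow> int \<Rightarrow> real \<Rightarrow> real" where
  "f_dens p q r x = (real_of_int (p - r) / real_of_int p) *
     (1 + real_of_int q / real_of_int (p - r) * indicator {0..<real_of_int r / real_of_int q} x)"

definition acim :: "int \<Rightarrow> int \<Rightarrow> int \<Rightarrow> real measure" where
  "acim p q r = density unit_leb (\<lambda>x. ennreal (f_dens p q r x))"

end

theory Submission
  imports Defs
begin

lemma frac_meas[measurable]: "frac \<in> borel_measurable (borel :: real measure)"
  unfolding frac_def by measurable

lemma L1:
  fixes n c :: nat and h :: "real \<Rightarrow> ennreal"
  assumes n: "n > 0" and hm[measurable]: "h \<in> borel_measurable borel"
  shows "(\<integral>\<^sup>+x. indicator {0..<real c / real n} x * h (frac (real n * x)) \<partial>lborel)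
       = ennreal (real c / real n) * (\<integral>\<^sup>+y. indicator {0..<1} y * h y \<partial>lborel)"
proof (induction c)
  case 0
  then show ?case by simp
next
  case (Suc c)
  have piece: "(\<integral>\<^sup>+x. indicator {real c / real n..<(real c + 1) / real n} x * h (frac (real n * x)) \<partial>lborel)
      = ennreal (1 / real n) * (\<integral>\<^sup>+y. indicator {0..<1} y * h y \<partial>lborel)"
  proof -
    have "(\<integral>\<^sup>+x. indicator {real c / real n..<(real c + 1) / real n} x * h (frac (real n * x)) \<partial>lborel)
      = ennreal \<bar>1 / real n\<bar> * (\<integral>\<^sup>+y. indicator {real c / real n..<(real c + 1) / real n} (real c / real n + 1 / real n * y) * h (frac (real n * (real c / real n + 1 / real n * y))) \<partial>lborel)"
      by (rule nn_integral_real_affine) (use n in auto)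
    also have "(\<lambda>y. indicator {real c / real n..<(real c + 1) / real n} (real c / real n + 1 / real n * y) * h (frac (real n * (real c / real n + 1 / real n * y))))
        = (\<lambda>y. indicator {0..<1} y * h y)"
    proof
      fix y
      have e: "real n * (real c / real n + 1 / real n * y) = of_int (int c) + y" using n by (simp add: field_simps)
      have i: "(real c / real n + 1 / real n * y \<in> {real c / real n..<(real c + 1) / real n}) = (y \<in> {0..<1})"
        using n by (auto simp: field_simps)
      show "indicator {real c / real n..<(real c + 1) / real n} (real c / real n + 1 / real n * y) * h (frac (real n * (real c / real n + 1 / real n * y))) = indicator {0..<1} y * h y"
        unfolding e frac_add_of_int_left using i by (auto simp: indicator_def)
    qed
    finally show ?thesis by simp
  qed
  have split: "\<And>x. indicator {0..<real (Suc c) / real n} x = (indicator {0..<real c / real n} x + indicator {real c / real n..<(real c + 1) / real n} x :: ennreal)"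
  proof -
    fix x
    have "0 \<le> x" if "real c \<le> x * real n" using that n
      by (metis mult_nonneg_nonneg not_le of_nat_0_le_iff of_nat_0_less_iff order_trans zero_le_mult_iff)
    then show "indicator {0..<real (Suc c) / real n} x = (indicator {0..<real c / real n} x + indicator {real c / real n..<(real c + 1) / real n} x :: ennreal)"
      using n by (auto simp: indicator_def field_simps)
  qed
  have "(\<integral>\<^sup>+x. indicator {0..<real (Suc c) / real n} x * h (frac (real n * x)) \<partial>lborel)
     = (\<integral>\<^sup>+x. indicator {0..<real c / real n} x * h (frac (real n * x)) + indicator {real c / real n..<(real c + 1) / real n} x * h (frac (real n * x)) \<partial>lborel)"
    unfolding split by (simp add: distrib_right)
  also have "\<dots> = (\<integral>\<^sup>+x. indicator {0..<real c / real n} x * h (frac (real n * x)) \<partial>lborel) + (\<integral>\<^sup>+x. indicator {real c / real n..<(real c + 1) / real n} x * h (frac (real n * x)) \<partial>lborel)"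
    by (rule nn_integral_add) auto
  also have "\<dots> = (ennreal (real c / real n) + ennreal (1 / real n)) * (\<integral>\<^sup>+y. indicator {0..<1} y * h y \<partial>lborel)"
    unfolding Suc.IH piece by (simp add: distrib_right)
  also have "ennreal (real c / real n) + ennreal (1 / real n) = ennreal (real (Suc c) / real n)"
    by (subst ennreal_plus[symmetric]) (auto simp: add_divide_distrib)
  finally show ?case .
qed

lemma L2:
  fixes P Q R :: real and M :: nat and g :: "real \<Rightarrow> ennreal"
  assumes Q: "Q > 0" and P: "P > 0" and PM: "P = real M * Q + R" and R: "0 \<le> R" "R < Q"
    and gm[measurable]: "g \<in> borel_measurable borel"
  shows "(\<integral>\<^sup>+y. indicator {0..<1} y * g (frac (P / Q * y)) \<partial>lborel)
       = (\<integral>\<^sup>+z. (ennreal (real M * Q / P) * indicator {0..<1} z + ennreal (Q / P) * indicator {0..<R / Q} z) * g z \<partial>lborel)"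
proof -
  have "(\<integral>\<^sup>+y. indicator {0..<1} y * g (frac (P / Q * y)) \<partial>lborel)
      = ennreal \<bar>Q / P\<bar> * (\<integral>\<^sup>+u. indicator {0..<1} (0 + Q / P * u) * g (frac (P / Q * (0 + Q / P * u))) \<partial>lborel)"
    by (rule nn_integral_real_affine) (use P Q in auto)
  also have "(\<lambda>u. indicator {0..<1} (0 + Q / P * u) * g (frac (P / Q * (0 + Q / P * u))))
      = (\<lambda>u. indicator {0..<real M} u * g (frac (real 1 * u)) + indicator {real M..<P/Q} u * g (frac u))"
  proof
    fix u
    have mq: "real M \<le> P / Q" using PM R Q by (simp add: field_simps)
    have "(0 + Q / P * u \<in> {0..<1}) = (u \<in> {0..<P/Q})" using P Q
      by (auto simp: field_simps zero_le_mult_iff)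
    moreover have "P / Q * (0 + Q / P * u) = u" using P Q by simp
    ultimately show "indicator {0..<1} (0 + Q / P * u) * g (frac (P / Q * (0 + Q / P * u))) =
        indicator {0..<real M} u * g (frac (real 1 * u)) + indicator {real M..<P/Q} u * g (frac u)"
      using mq by (auto simp: indicator_def)
  qed
  also have "(\<integral>\<^sup>+u. indicator {0..<real M} u * g (frac (real 1 * u)) + indicator {real M..<P/Q} u * g (frac u) \<partial>lborel)
     = (\<integral>\<^sup>+u. indicator {0..<real M / real 1} u * g (frac (real 1 * u)) \<partial>lborel) + (\<integral>\<^sup>+u. indicator {real M..<P/Q} u * g (frac u) \<partial>lborel)"
    by (subst nn_integral_add) auto
  also have "(\<integral>\<^sup>+u. indicator {0..<real M / real 1} u * g (frac (real 1 * u)) \<partial>lborel)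
     = ennreal (real M) * (\<integral>\<^sup>+y. indicator {0..<1} y * g y \<partial>lborel)"
    by (subst L1) auto
  also have "(\<integral>\<^sup>+u. indicator {real M..<P/Q} u * g (frac u) \<partial>lborel)
     = ennreal \<bar>1\<bar> * (\<integral>\<^sup>+z. indicator {real M..<P/Q} (real M + 1 * z) * g (frac (real M + 1 * z)) \<partial>lborel)"
    by (rule nn_integral_real_affine) auto
  also have "(\<lambda>z. indicator {real M..<P/Q} (real M + 1 * z) * g (frac (real M + 1 * z))) = (\<lambda>z. indicator {0..<R/Q} z * g z)"
  proof
    fix z
    have a: "P / Q = real M + R / Q" using PM Q by (simp add: field_simps)
    have b: "R / Q < 1" using R Q by simp
    have c: "frac (real M + z) = frac z"
      using frac_add_of_int_left[of "int M" z] by simp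
    show "indicator {real M..<P/Q} (real M + 1 * z) * g (frac (real M + 1 * z)) = indicator {0..<R/Q} z * g z"
      unfolding a using b c by (auto simp: indicator_def)
  qed
  finally have 1: "(\<integral>\<^sup>+y. indicator {0..<1} y * g (frac (P / Q * y)) \<partial>lborel)
     = ennreal (Q / P) * (ennreal (real M) * (\<integral>\<^sup>+y. indicator {0..<1} y * g y \<partial>lborel)
        + (\<integral>\<^sup>+z. indicator {0..<R/Q} z * g z \<partial>lborel))"
    using P Q by simp
  have 2: "(\<integral>\<^sup>+z. (ennreal (real M * Q / P) * indicator {0..<1} z + ennreal (Q / P) * indicator {0..<R / Q} z) * g z \<partial>lborel)
     = ennreal (real M * Q / P) * (\<integral>\<^sup>+z. indicator {0..<1} z * g z \<partial>lborel) + ennreal (Q / P) * (\<integral>\<^sup>+z. indicator {0..<R/Q} z * g z \<partial>lborel)"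
    by (simp add: distrib_right mult.assoc nn_integral_add nn_integral_cmult)
  have 3: "ennreal (real M * Q / P) = ennreal (Q / P) * ennreal (real M)"
    using P Q by (simp add: ennreal_mult'[symmetric] mult.commute)
  show ?thesis unfolding 1 2 by (simp only: 3 distrib_left mult.assoc)
qed

lemma L3:
  fixes k q r :: nat and a b :: real and h :: "real \<Rightarrow> ennreal"
  assumes k: "k > 0" and q: "q > 0" and ab: "a \<ge> 0" "b \<ge> 0" "a + b * (real r / real q) = 1"
    and hm[measurable]: "h \<in> borel_measurable borel"
  shows "(\<integral>\<^sup>+x. (ennreal a * indicator {0..<1} x + ennreal b * indicator {0..<real r / real q} x) * h (frac (real (k * q) * x)) \<partial>lborel)
       = (\<integral>\<^sup>+y. indicator {0..<1} y * h y \<partial>lborel)"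
proof -
  have kq: "k * q > 0" using k q by simp
  have e1: "{0..<1::real} = {0..<real (k*q) / real (k*q)}" using kq by simp
  have e2: "real r / real q = real (k*r) / real (k*q)" using k by simp
  have "(\<integral>\<^sup>+x. (ennreal a * indicator {0..<1} x + ennreal b * indicator {0..<real r / real q} x) * h (frac (real (k * q) * x)) \<partial>lborel)
    = ennreal a * (\<integral>\<^sup>+x. indicator {0..<real (k*q) / real (k*q)} x * h (frac (real (k * q) * x)) \<partial>lborel)
      + ennreal b * (\<integral>\<^sup>+x. indicator {0..<real (k*r) / real (k*q)} x * h (frac (real (k * q) * x)) \<partial>lborel)"
    unfolding e1[symmetric] e2[symmetric]
    by (simp add: distrib_right mult.assoc nn_integral_add nn_integral_cmult)
  also have "\<dots> = ennreal a * (ennreal 1 * (\<integral>\<^sup>+y. indicator {0..<1} y * h y \<partial>lborel))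
      + ennreal b * (ennreal (real r / real q) * (\<integral>\<^sup>+y. indicator {0..<1} y * h y \<partial>lborel))"
    by (subst L1[OF kq hm], subst L1[OF kq hm]) (simp only: e2, use kq in simp)
  also have "\<dots> = (ennreal a + ennreal b * ennreal (real r / real q)) * (\<integral>\<^sup>+y. indicator {0..<1} y * h y \<partial>lborel)"
    by (simp add: distrib_right mult.assoc)
  also have "ennreal a + ennreal b * ennreal (real r / real q) = 1"
  proof -
    have "ennreal b * ennreal (real r / real q) = ennreal (b * (real r / real q))"
      using ab by (subst ennreal_mult) auto
    moreover have "ennreal a + ennreal (b * (real r / real q)) = ennreal (a + b * (real r / real q))"
      using ab by (intro ennreal_plus[symmetric]) auto
    ultimately show ?thesis using ab(3) by simp
  qed
  finally show ?thesis by simp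
qed

theorem proposition2p1:
  fixes p q m r k :: int
  assumes "1 < q" and "q < p" and "coprime p q"
    and "0 \<le> m" and "p = m * q + r" and "1 \<le> r" and "r \<le> q - 1"
    and "1 \<le> k"
  shows "prob_space (acim p q r) \<and>
    (T (real_of_int p / real_of_int q) \<circ> T (real_of_int (k * q)))
      \<in> measurable (acim p q r) (acim p q r) \<and>
    distr (acim p q r) (acim p q r)
      (T (real_of_int p / real_of_int q) \<circ> T (real_of_int (k * q))) = acim p q r"
proof -
  define q' where "q' = nat q"
  define r' where "r' = nat r"
  define m' where "m' = nat m"
  define k' where "k' = nat k"
  define P where "P = real_of_int p"
  have qq: "real_of_int q = real q'" using assms unfolding q'_def by simp
  have rr: "real_of_int r = real r'" using assms unfolding r'_def by simp
  have mm: "real_of_int m = real m'" using assms unfolding m'_def by simp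
  have kk: "real_of_int k = real k'" using assms unfolding k'_def by simp
  have q'0: "q' > 0" and k'0: "k' > 0" using assms unfolding q'_def k'_def by auto
  have PM: "P = real m' * real q' + real r'"
    unfolding P_def using assms(5) qq rr mm by (metis of_int_add of_int_mult)
  have R0: "0 \<le> real r'" and RQ: "real r' < real q'" using assms qq rr by linarith+
  have Ppos: "P > 0" using assms(1,2) unfolding P_def by simp
  have mpos: "real m' > 0"
  proof -
    have "m \<noteq> 0"
    proof
      assume "m = 0"
      then have "p = r" using assms(5) by simp
      then show False using assms(2,7) by simp
    qed
    then have "m > 0" using assms(4) by simp
    then show ?thesis unfolding m'_def by simp
  qed
  define a where "a = real m' * real q' / P"
  define b where "b = real q' / P"
  define F where "F = (\<lambda>z. ennreal a * indicator {0..<1} z + ennreal b * indicator {0..<real r' / real q'} z)"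
  have ab0: "a \<ge> 0" "b \<ge> 0" using Ppos unfolding a_def b_def by auto
  have ab1: "a + b * (real r' / real q') = 1"
  proof -
    have "b * (real r' / real q') = real r' / P" using q'0 unfolding b_def by simp
    then have "a + b * (real r' / real q') = (real m' * real q' + real r') / P"
      unfolding a_def by (simp add: add_divide_distrib)
    then show ?thesis using PM Ppos by simp
  qed
  have RQ1: "real r' / real q' < 1" using RQ q'0 by simp
  have key: "ennreal (f_dens p q r x) * indicator {0..<1} x = F x" for x
  proof -
    have pr: "real_of_int (p - r) = real m' * real q'" using PM rr unfolding P_def by simp
    have fd: "f_dens p q r x = a + b * indicator {0..<real r' / real q'} x"
      unfolding f_dens_def a_def b_def P_def pr qq rr[symmetric] using mpos q'0 Ppos P_def
      by (simp add: field_simps)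
    show ?thesis
    proof (cases "x \<in> {0..<real r' / real q'}")
      case True
      then have "x \<in> {0..<1}" using RQ1 by auto
      then show ?thesis using True ab0 unfolding fd F_def by (simp add: ennreal_plus)
    next
      case False
      then show ?thesis using ab0 unfolding fd F_def by (simp add: indicator_def)
    qed
  qed
  have fm[measurable]: "(\<lambda>x. ennreal (f_dens p q r x)) \<in> borel_measurable borel"
    unfolding f_dens_def by measurable
  have Fm[measurable]: "F \<in> borel_measurable borel" unfolding F_def by measurable
  have sets_acim: "sets (acim p q r) = sets unit_leb" unfolding acim_def by simp
  have space_acim: "space (acim p q r) = {0..<1}" unfolding acim_def unit_leb_def by simp
  define S where "S = T (real_of_int p / real_of_int q) \<circ> T (real_of_int (k * q))"
  have S_eq: "S x = frac (P / real q' * frac (real (k' * q') * x))" for x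
    unfolding S_def T_def P_def qq kk by (simp add: qq kk)
  have Sb[measurable]: "S \<in> borel_measurable borel" unfolding S_eq[abs_def] by measurable
  have SU: "S \<in> measurable unit_leb unit_leb" unfolding unit_leb_def
  proof (rule measurable_restrict_space3)
    show "S \<in> measurable lborel lborel" using Sb by simp
    show "S \<in> {0..<1} \<rightarrow> {0..<1}" by (auto simp: S_eq frac_lt_1)
  qed
  have SM: "S \<in> measurable (acim p q r) (acim p q r)"
    using SU by (simp add: measurable_cong_sets[OF sets_acim sets_acim])
  have fmU: "(\<lambda>x. ennreal (f_dens p q r x)) \<in> borel_measurable unit_leb"
    unfolding unit_leb_def by (rule measurable_restrict_space1) simp
  have setsU: "A \<in> sets unit_leb \<longleftrightarrow> A \<subseteq> {0..<1} \<and> A \<in> sets borel" for A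
    unfolding unit_leb_def by (subst sets_restrict_space_iff) auto
  have em: "emeasure (acim p q r) A = (\<integral>\<^sup>+z. F z * indicator A z \<partial>lborel)" if A: "A \<in> sets unit_leb" for A
  proof -
    have "emeasure (acim p q r) A = (\<integral>\<^sup>+x. ennreal (f_dens p q r x) * indicator A x \<partial>unit_leb)"
      unfolding acim_def by (rule emeasure_density[OF fmU A])
    also have "\<dots> = (\<integral>\<^sup>+x. ennreal (f_dens p q r x) * indicator A x * indicator {0..<1} x \<partial>lborel)"
      unfolding unit_leb_def by (rule nn_integral_restrict_space) simp
    also have "\<dots> = (\<integral>\<^sup>+z. F z * indicator A z \<partial>lborel)"
      by (rule nn_integral_cong) (metis key mult.assoc mult.commute)
    finally show ?thesis .
  qed
  have main: "emeasure (distr (acim p q r) (acim p q r) S) A = emeasure (acim p q r) A"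
    if A: "A \<in> sets (acim p q r)" for A
  proof -
    have AU: "A \<in> sets unit_leb" using A sets_acim by simp
    then have Ab[measurable]: "A \<in> sets borel" using setsU by blast
    have pre: "S -` A \<inter> {0..<1} \<in> sets unit_leb"
      using measurable_sets[OF SU AU] unfolding unit_leb_def by simp
    have "emeasure (distr (acim p q r) (acim p q r) S) A = emeasure (acim p q r) (S -` A \<inter> {0..<1})"
      using emeasure_distr[OF SM A] space_acim by simp
    also have "\<dots> = (\<integral>\<^sup>+x. F x * indicator (S -` A \<inter> {0..<1}) x \<partial>lborel)"
      by (rule em[OF pre])
    also have "\<dots> = (\<integral>\<^sup>+x. F x * indicator A (frac (P / real q' * frac (real (k' * q') * x))) \<partial>lborel)"
      by (rule nn_integral_cong) (use RQ1 in \<open>auto simp: F_def S_eq indicator_def\<close>)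
    also have "\<dots> = (\<integral>\<^sup>+y. indicator {0..<1} y * indicator A (frac (P / real q' * y)) \<partial>lborel)"
      unfolding F_def by (rule L3[OF k'0 q'0 ab0 ab1]) measurable
    also have "\<dots> = (\<integral>\<^sup>+z. F z * indicator A z \<partial>lborel)"
      unfolding F_def a_def b_def
      by (rule L2[of "real q'" P m' "real r'"]) (use q'0 Ppos PM R0 RQ in auto)
    also have "\<dots> = emeasure (acim p q r) A" by (rule em[OF AU, symmetric])
    finally show ?thesis .
  qed
  have prob: "prob_space (acim p q r)"
  proof (rule prob_spaceI)
    have U: "{0..<1::real} \<in> sets unit_leb" using setsU by auto
    have "emeasure (acim p q r) {0..<1} = (\<integral>\<^sup>+z. F z * 1 \<partial>lborel)"
      unfolding em[OF U] by (rule nn_integral_cong) (use RQ1 in \<open>auto simp: F_def indicator_def\<close>)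
    also have "\<dots> = (\<integral>\<^sup>+y. indicator {0..<1} y * (\<lambda>_. 1) (frac (P / real q' * y)) \<partial>lborel)"
      unfolding F_def a_def b_def
      by (rule L2[of "real q'" P m' "real r'", symmetric]) (use q'0 Ppos PM R0 RQ in auto)
    also have "\<dots> = 1" by simp
    finally show "emeasure (acim p q r) (space (acim p q r)) = 1" unfolding space_acim .
  qed
  have "distr (acim p q r) (acim p q r) S = acim p q r"
    by (rule measure_eqI) (auto intro: main)
  then show ?thesis using prob SM unfolding S_def by simp
qed

end
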